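(* Let $k\in\omega\setminus\{0\}$, let $f_{i_1},\dots,f_{i_n}\in\{f_1,\dots,f_{m(k)}\}$ ($n\ge0$), and let $T=T_k^*(f_{i_1},0)\cdots(f_{i_n},0)$. If $T\ne\Lambda$, then $r(T)\ge\max(1,k-n)$.
   Context: Notation: $\omega=\{0,1,2,\dots\}$; $\mathcal P(\omega)$ is the set of nonempty finite subsets of $\omega$; $E_2=\{0,1\}$. $P=\{f_i:i\in\omega\}$ is a set of attributes. Decision tables: $\mathcal M_2^\infty$ is the set of rectangular tables filled with numbers from $E_2$, whose columns are labeled with pairwise different attributes from $P$, whose rows are pairwise different, and each row of which is labeled with a set from $\mathcal P(\omega)$ (its set of decisions). The empty table is denoted $\Lambda$. For nonempty $T$ and a word $\alpha=(f_{i_1},\delta_1)\cdots(f_{i_m},\delta_m)$ with $f_{i_j}$ column attributes of $T$ and $\delta_j\in E_2$, $T\alpha$ is the subtable consisting of the rows having value $\delta_j$ in column $f_{i_j}$ for all $j$; $T\lambda=T$ for the empty word; $\Lambda\alpha=\Lambda$. The graph $G_k$ and tables $T_k$, $T_k^*$ ($k\ge1$): $G_k$ is a directed graph whose nodes are arranged in $k$ layers, layer $s$ ($1\le s\le k$) containing $s$ nodes; the nodes are numbered $1,\dots,m(k)$, $m(k)=k(k+1)/2$, layer by layer from the top and from left to right within a layer (so the $j$th node of layer $s$ has number $s(s-1)/2+j$). For a node $i$ that is the $j$th node of layer $s<k$, its left child $l(i)$ is the $j$th node of layer $s+1$ and its right child $p(i)$ is the $(j+1)$th node of layer $s+1$;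 the edges of $G_k$ go from each node to its two children. Define $\nu_k:E_2^{m(k)}\to\mathcal P(\omega)$: for $\bar\delta=(\delta_1,\dots,\delta_{m(k)})$, $\nu_k(\bar\delta)\subseteq\{0,1,\dots,m(k)\}$, where $0\in\nu_k(\bar\delta)$ iff $\delta_1=0$; for a node $i$ not in layer $k$, $i\in\nu_k(\bar\delta)$ iff $\delta_i=1$ and $\delta_{l(i)}=\delta_{p(i)}=0$; for a node $i$ in layer $k$, $i\in\nu_k(\bar\delta)$ iff $\delta_i=1$. $T_k\in\mathcal M_2^\infty$ is the table with $m(k)$ columns labeled $f_1,\dots,f_{m(k)}$ (column $f_i$ corresponding to node $i$), whose rows are all $2^{m(k)}$ tuples of $E_2^{m(k)}$, each row $\bar\delta$ labeled with $\nu_k(\bar\delta)$. A complete path in $G_k$ is a directed path from node $1$ to a node of layer $k$; its characteristic tuple is $(\delta_1,\dots,\delta_{m(k)})\in E_2^{m(k)}$ with $\delta_i=1$ iff the path passes through node $i$. $T_k^*$ is the subtable of $T_k$ consisting of exactly the rows that are characteristic tuples of complete paths in $G_k$. For a subtable $T$ of $T_k^*$ with rows $\bar\delta_1,\dots,\bar\delta_t$, $r(T)=|\{\nu_k(\bar\delta_1),\dots,\nu_k(\bar\delta_t)\}|$ (the number of distinct decision sets among its rows). *)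

theory Defs
  imports Main
begin

text \<open>Number of nodes of G_k.\<close>
definition m :: "nat \<Rightarrow> nat" where
  "m k = k * (k + 1) div 2"

text \<open>Layer of node i (for i \<ge> 1): the least s with i \<le> s(s+1)/2.
  The j-th node of layer s has number s(s-1)/2 + j.\<close>
definition layer :: "nat \<Rightarrow> nat" where
  "layer i = (LEAST s. i \<le> s * (s + 1) div 2)"

definition pos_in_layer :: "nat \<Rightarrow> nat" where
  "pos_in_layer i = i - layer i * (layer i - 1) div 2"

definition node_num :: "nat \<Rightarrow> nat \<Rightarrow> nat" where
  "node_num s j = s * (s - 1) div 2 + j"

definition lch :: "nat \<Rightarrow> nat" where
  "lch i = node_num (layer i + 1) (pos_in_layer i)"

definition rch :: "nat \<Rightarrow> nat" where
  "rch i = node_num (layer i + 1) (pos_in_layer i + 1)"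

definition edge :: "nat \<Rightarrow> nat \<Rightarrow> nat \<Rightarrow> bool" where
  "edge k i j \<longleftrightarrow> i \<in> {1..m k} \<and> layer i < k \<and> (j = lch i \<or> j = rch i)"

text \<open>Tuples of E_2^{m(k)} are lists of length m(k) over {0,1};
  component \<delta>_i (1 \<le> i \<le> m(k)) is \<delta> ! (i - 1).\<close>
definition comp :: "nat list \<Rightarrow> nat \<Rightarrow> nat" where
  "comp \<delta> i = \<delta> ! (i - 1)"

definition tuples :: "nat \<Rightarrow> nat list set" where
  "tuples k = {\<delta>. length \<delta> = m k \<and> set \<delta> \<subseteq> {0, 1}}"

definition nu :: "nat \<Rightarrow> nat list \<Rightarrow> nat set" where
  "nu k \<delta> =
     (if comp \<delta> 1 = 0 then {0} else {})
     \<union> {i \<in> {1..m k}. layer i < k \<and> comp \<delta> i = 1 \<and> comp \<delta> (lch i) = 0 \<and> comp \<delta> (rch i) = 0}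
     \<union> {i \<in> {1..m k}. layer i = k \<and> comp \<delta> i = 1}"

definition complete_path :: "nat \<Rightarrow> nat list \<Rightarrow> bool" where
  "complete_path k ps \<longleftrightarrow> ps \<noteq> [] \<and> hd ps = 1 \<and> last ps \<in> {1..m k} \<and> layer (last ps) = k
     \<and> (\<forall>t. Suc t < length ps \<longrightarrow> edge k (ps ! t) (ps ! Suc t))"

definition char_tuple :: "nat \<Rightarrow> nat list \<Rightarrow> nat list" where
  "char_tuple k ps = map (\<lambda>i. if i \<in> set ps then 1 else 0) [1..<m k + 1]"

text \<open>A subtable is represented by its set of rows (columns f_1..f_{m(k)}, row labels given by nu k);
  the empty table \<Lambda> is the empty row set.\<close>
definition Tk_rows :: "nat \<Rightarrow> nat list set" where
  "Tk_rows k = tuples k"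

definition Tstar_rows :: "nat \<Rightarrow> nat list set" where
  "Tstar_rows k = {char_tuple k ps | ps. complete_path k ps}"

text \<open>T(f_{i_1},\<delta>_1)...(f_{i_n},\<delta>_n) for a word given as list of (attribute index, value).\<close>
definition subtable :: "nat list set \<Rightarrow> (nat \<times> nat) list \<Rightarrow> nat list set" where
  "subtable T \<alpha> = {\<delta> \<in> T. \<forall>(i, d) \<in> set \<alpha>. comp \<delta> i = d}"

definition r :: "nat \<Rightarrow> nat list set \<Rightarrow> nat" where
  "r k T = card (nu k ` T)"

end

theory Submission
  imports Defs
begin

definition tri :: "nat \<Rightarrow> nat" where "tri n = n * (n + 1) div 2"

lemma tri_Suc: "tri (Suc n) = tri n + Suc n"
  unfolding tri_def by (simp add: algebra_simps)

lemma tri_mono: "a \<le> b \<Longrightarrow> tri a \<le> tri b"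
  by (rule lift_Suc_mono_le[of tri]) (auto simp: tri_Suc)

lemma m_tri: "m k = tri k" by (simp add: m_def tri_def)

lemma nn_eq: "1 \<le> s \<Longrightarrow> node_num s j = tri (s - 1) + j"
  by (cases s) (auto simp: node_num_def tri_def mult.commute)

lemma nn_le: "1 \<le> j \<Longrightarrow> j \<le> s \<Longrightarrow> node_num s j \<le> tri s"
  using nn_eq[of s j] tri_Suc[of "s - 1"] by simp

lemma nn_ge: "1 \<le> j \<Longrightarrow> 1 \<le> node_num s j"
  by (simp add: node_num_def)

lemma layer_nn: assumes "1 \<le> j" "j \<le> s" shows "layer (node_num s j) = s"
proof -
  have e: "node_num s j = tri (s - 1) + j" using assms nn_eq by simp
  have "layer (node_num s j) = (LEAST x. node_num s j \<le> tri x)"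
    by (simp add: layer_def tri_def)
  also have "\<dots> = s"
  proof (rule Least_equality)
    show "node_num s j \<le> tri s" using nn_le assms by simp
  next
    fix y assume y: "node_num s j \<le> tri y"
    show "s \<le> y"
    proof (rule ccontr)
      assume "\<not> s \<le> y"
      then have "tri y \<le> tri (s - 1)" by (intro tri_mono) simp
      with y e assms show False by simp
    qed
  qed
  finally show ?thesis .
qed

lemma pos_nn: "1 \<le> j \<Longrightarrow> j \<le> s \<Longrightarrow> pos_in_layer (node_num s j) = j"
  unfolding pos_in_layer_def by (simp add: layer_nn) (simp add: node_num_def)

lemma lch_nn: "1 \<le> j \<Longrightarrow> j \<le> s \<Longrightarrow> lch (node_num s j) = node_num (Suc s) j"
  by (simp add: lch_def layer_nn pos_nn)

lemma rch_nn: "1 \<le> j \<Longrightarrow> j \<le> s \<Longrightarrow> rch (node_num s j) = node_num (Suc s) (Suc j)"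
  by (simp add: rch_def layer_nn pos_nn)

definition vpath :: "nat list \<Rightarrow> bool" where
  "vpath ps \<longleftrightarrow> ps \<noteq> [] \<and> hd ps = 1 \<and>
     (\<forall>t. Suc t < length ps \<longrightarrow> ps ! Suc t = lch (ps ! t) \<or> ps ! Suc t = rch (ps ! t))"

lemma vpath_nth: "vpath ps \<Longrightarrow> t < length ps \<Longrightarrow> \<exists>j. 1 \<le> j \<and> j \<le> Suc t \<and> ps ! t = node_num (Suc t) j"
proof (induction t)
  case 0
  then have "ps ! 0 = 1" by (metis hd_conv_nth vpath_def)
  then show ?case by (intro exI[of _ 1]) (simp add: node_num_def)
next
  case (Suc t)
  then obtain j where j: "1 \<le> j" "j \<le> Suc t" "ps ! t = node_num (Suc t) j" by auto
  from Suc.prems have "ps ! Suc t = lch (ps ! t) \<or> ps ! Suc t = rch (ps ! t)"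
    by (simp add: vpath_def)
  then show ?case using j lch_nn[OF j(1,2)] rch_nn[OF j(1,2)]
    by (metis Suc_le_mono le_SucI le_add2 plus_1_eq_Suc)
qed

lemma vpath_layer: "vpath ps \<Longrightarrow> t < length ps \<Longrightarrow> layer (ps ! t) = Suc t"
proof -
  assume "vpath ps" "t < length ps"
  then obtain j where "1 \<le> j" "j \<le> Suc t" "ps ! t = node_num (Suc t) j" using vpath_nth by blast
  then show ?thesis using layer_nn by simp
qed

lemma vpath_bounds: "vpath ps \<Longrightarrow> t < length ps \<Longrightarrow> 1 \<le> ps ! t \<and> ps ! t \<le> tri (Suc t)"
proof -
  assume "vpath ps" "t < length ps"
  then obtain j where "1 \<le> j" "j \<le> Suc t" "ps ! t = node_num (Suc t) j" using vpath_nth by blast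
  then show ?thesis using nn_le nn_ge by simp
qed

lemma cp_iff: assumes "k \<ge> 1" shows "complete_path k ps \<longleftrightarrow> vpath ps \<and> length ps = k"
proof
  assume c: "complete_path k ps"
  then have v: "vpath ps" by (auto simp: complete_path_def vpath_def edge_def)
  have "ps \<noteq> []" using c by (simp add: complete_path_def)
  then have "last ps = ps ! (length ps - 1)" "length ps - 1 < length ps" by (auto simp: last_conv_nth)
  then have "layer (last ps) = length ps" using vpath_layer[OF v] by simp
  with c v show "vpath ps \<and> length ps = k" by (simp add: complete_path_def)
next
  assume a: "vpath ps \<and> length ps = k"
  then have v: "vpath ps" and l: "length ps = k" by auto
  have ne: "ps \<noteq> []" using v by (simp add: vpath_def)
  have lst: "last ps = ps ! (k - 1)" using ne l by (simp add: last_conv_nth)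
  have kk: "k - 1 < length ps" using l assms by simp
  have "layer (last ps) = k" using vpath_layer[OF v kk] lst assms by simp
  moreover have "last ps \<in> {1..m k}" using vpath_bounds[OF v kk] lst assms by (simp add: m_tri)
  moreover have "edge k (ps ! t) (ps ! Suc t)" if "Suc t < length ps" for t
  proof -
    have t: "t < length ps" using that by simp
    have "ps ! t \<le> tri k" using vpath_bounds[OF v t] tri_mono[of "Suc t" k] that l by simp
    then show ?thesis using vpath_bounds[OF v t] vpath_layer[OF v t] that l v
      by (auto simp: edge_def m_tri vpath_def)
  qed
  ultimately show "complete_path k ps" using v by (simp add: complete_path_def vpath_def)
qed

lemma set_vpath: assumes "vpath ps" "length ps = k" shows "set ps \<subseteq> {1..m k}"
proof
  fix x assume "x \<in> set ps"
  then obtain t where t: "t < length ps" "ps ! t = x" by (auto simp: in_set_conv_nth)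
  then show "x \<in> {1..m k}" using vpath_bounds[OF assms(1) t(1)] tri_mono[of "Suc t" k] assms(2)
    by (auto simp: m_tri)
qed

lemma comp_char: "i \<in> {1..m k} \<Longrightarrow> comp (char_tuple k ps) i = (if i \<in> set ps then 1 else 0)"
proof -
  assume i: "i \<in> {1..m k}"
  have l: "i - 1 < length [1..<m k + 1]" using i by (simp del: upt_Suc) linarith
  have n: "[1..<m k + 1] ! (i - 1) = i" using i nth_upt[of 1 "i - 1" "m k + 1"] by simp
  show ?thesis unfolding comp_def char_tuple_def using nth_map[OF l, of "\<lambda>i. if i \<in> set ps then 1 else 0"] n
    by simp
qed

lemma comp_in: "x \<in> set ps \<Longrightarrow> set ps \<subseteq> {1..m k} \<Longrightarrow> comp (char_tuple k ps) x = 1"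
  using comp_char[of x k ps] by auto

lemma comp_one: "comp (char_tuple k ps) x = 1 \<Longrightarrow> x \<in> {1..m k} \<Longrightarrow> x \<in> set ps"
  using comp_char[of x k ps] by (auto split: if_splits)

lemma nu_char: assumes "k \<ge> 1" "vpath ps" "length ps = k"
  shows "nu k (char_tuple k ps) = {last ps}"
proof -
  define \<delta> where "\<delta> = char_tuple k ps"
  have S: "set ps \<subseteq> {1..m k}" using set_vpath assms by simp
  have ne: "ps \<noteq> []" using assms by (simp add: vpath_def)
  have h1: "1 \<in> set ps" using assms(2) ne by (metis hd_in_set vpath_def)
  have c1: "comp \<delta> 1 = 1" unfolding \<delta>_def by (rule comp_in[OF h1 S])
  have mid: "{i \<in> {1..m k}. layer i < k \<and> comp \<delta> i = 1 \<and> comp \<delta> (lch i) = 0 \<and> comp \<delta> (rch i) = 0} = {}"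
  proof -
    { fix i assume i: "i \<in> {1..m k}" "layer i < k" "comp \<delta> i = 1" "comp \<delta> (lch i) = 0" "comp \<delta> (rch i) = 0"
      have "i \<in> set ps" using comp_one[of k ps i] i unfolding \<delta>_def by blast
      then obtain t where t: "t < length ps" "ps ! t = i" by (auto simp: in_set_conv_nth)
      have "layer i = Suc t" using vpath_layer[OF assms(2) t(1)] t by simp
      then have st: "Suc t < length ps" using i assms by simp
      have o: "ps ! Suc t = lch (ps ! t) \<or> ps ! Suc t = rch (ps ! t)" using assms(2) st unfolding vpath_def by blast
      have "ps ! Suc t \<in> set ps" using st by simp
      then have "comp \<delta> (ps ! Suc t) = 1" unfolding \<delta>_def using S by (rule comp_in)
      with o i t have False by auto }
    then show ?thesis by blast
  qed
  have lst: "last ps = ps ! (k - 1)" "k - 1 < length ps" using ne assms by (auto simp: last_conv_nth)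
  have ll: "layer (last ps) = k" using vpath_layer[OF assms(2) lst(2)] lst assms by simp
  have lin: "last ps \<in> set ps" using ne by simp
  have lm: "last ps \<in> {1..m k}" using lin S by blast
  have cl: "comp \<delta> (last ps) = 1" unfolding \<delta>_def by (rule comp_in[OF lin S])
  have last: "{i \<in> {1..m k}. layer i = k \<and> comp \<delta> i = 1} = {last ps}"
  proof -
    { fix i assume i: "i \<in> {1..m k}" "layer i = k" "comp \<delta> i = 1"
      have "i \<in> set ps" using comp_one[of k ps i] i unfolding \<delta>_def by blast
      then obtain t where t: "t < length ps" "ps ! t = i" by (auto simp: in_set_conv_nth)
      have "Suc t = k" using vpath_layer[OF assms(2) t(1)] t i by simp
      then have "t = k - 1" by simp
      then have "i = last ps" using lst t by simp }
    then show ?thesis using lm ll cl by blast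
  qed
  have "nu k \<delta> = {} \<union> {} \<union> {last ps}" unfolding nu_def mid last using c1 by simp
  then show ?thesis by (simp add: \<delta>_def)
qed

definition Ends :: "nat \<Rightarrow> nat set \<Rightarrow> nat set" where
  "Ends s A = last ` {ps. vpath ps \<and> length ps = s \<and> set ps \<inter> A = {}}"

lemma Ends_layer: assumes "e \<in> Ends s A" shows "\<exists>j. 1 \<le> j \<and> j \<le> s \<and> e = node_num s j"
proof -
  obtain ps where p: "vpath ps" "length ps = s" "e = last ps" using assms by (auto simp: Ends_def)
  have ne: "ps \<noteq> []" using p by (simp add: vpath_def)
  then have e: "e = ps ! (s - 1)" and sl: "s - 1 < length ps" using p by (auto simp: last_conv_nth)
  obtain j where j: "1 \<le> j" "j \<le> Suc (s - 1)" "ps ! (s - 1) = node_num (Suc (s - 1)) j"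
    using vpath_nth[OF p(1) sl] by blast
  have "Suc (s - 1) = s" using sl p(2) by simp
  then show ?thesis using j e by auto
qed

lemma Ends_finite: "finite (Ends s A)"
proof (rule finite_subset[of _ "{..tri s}"])
  show "Ends s A \<subseteq> {..tri s}"
  proof
    fix e assume "e \<in> Ends s A"
    then obtain j where "1 \<le> j" "j \<le> s" "e = node_num s j" using Ends_layer by blast
    then show "e \<in> {..tri s}" using nn_le by simp
  qed
qed simp

lemma vpath_snoc: assumes "vpath ps" "x = lch (last ps) \<or> x = rch (last ps)" shows "vpath (ps @ [x])"
proof -
  have ne: "ps \<noteq> []" using assms by (simp add: vpath_def)
  { fix t assume t: "Suc t < length (ps @ [x])"
    have "(ps @ [x]) ! Suc t = lch ((ps @ [x]) ! t) \<or> (ps @ [x]) ! Suc t = rch ((ps @ [x]) ! t)"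
    proof (cases "Suc t < length ps")
      case True then show ?thesis using assms(1) by (simp add: vpath_def nth_append)
    next
      case False
      then have "Suc t = length ps" using t by simp
      then have "t = length ps - 1" "t < length ps" by auto
      then show ?thesis using assms(2) ne by (simp add: nth_append last_conv_nth)
    qed }
  then show ?thesis using assms ne by (simp add: vpath_def)
qed

lemma vpath_butlast: assumes "vpath ps" "length ps \<ge> 2"
  shows "vpath (butlast ps) \<and> (last ps = lch (last (butlast ps)) \<or> last ps = rch (last (butlast ps)))"
proof -
  obtain qs x where q: "ps = qs @ [x]" using assms by (metis append_butlast_last_id le_zero_eq list.size(3) zero_neq_numeral)
  have qne: "qs \<noteq> []" using q assms by auto
  have "hd qs = 1" using assms(1) qne q by (simp add: vpath_def)
  moreover have "\<forall>t. Suc t < length qs \<longrightarrow> qs ! Suc t = lch (qs ! t) \<or> qs ! Suc t = rch (qs ! t)"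
  proof (intro allI impI)
    fix t assume t: "Suc t < length qs"
    then have "Suc t < length ps" using q by simp
    then have "ps ! Suc t = lch (ps ! t) \<or> ps ! Suc t = rch (ps ! t)" using assms(1) by (simp add: vpath_def)
    moreover have "ps ! Suc t = qs ! Suc t" "ps ! t = qs ! t" using q t by (auto simp: nth_append)
    ultimately show "qs ! Suc t = lch (qs ! t) \<or> qs ! Suc t = rch (qs ! t)" by simp
  qed
  moreover have "x = lch (last qs) \<or> x = rch (last qs)"
  proof -
    have "Suc (length qs - 1) < length ps" using q qne by simp
    then have "ps ! Suc (length qs - 1) = lch (ps ! (length qs - 1)) \<or> ps ! Suc (length qs - 1) = rch (ps ! (length qs - 1))"
      using assms(1) by (simp add: vpath_def)
    then show ?thesis using q qne by (simp add: nth_append last_conv_nth)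
  qed
  ultimately show ?thesis using q qne by (simp add: vpath_def)
qed

lemma Ends_Suc: assumes "s \<ge> 1" shows "Ends (Suc s) A = (lch ` Ends s A \<union> rch ` Ends s A) - A"
proof
  show "Ends (Suc s) A \<subseteq> (lch ` Ends s A \<union> rch ` Ends s A) - A"
  proof
    fix e assume "e \<in> Ends (Suc s) A"
    then obtain ps where p: "vpath ps" "length ps = Suc s" "set ps \<inter> A = {}" "e = last ps"
      by (auto simp: Ends_def)
    have b: "vpath (butlast ps)" "last ps = lch (last (butlast ps)) \<or> last ps = rch (last (butlast ps))"
      using vpath_butlast[OF p(1)] p assms by auto
    have "set (butlast ps) \<inter> A = {}" using p(3) in_set_butlastD by fastforce
    then have "last (butlast ps) \<in> Ends s A" using b p unfolding Ends_def by auto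
    moreover have "e \<notin> A" using p by (metis disjoint_iff last_in_set list.size(3) nat.distinct(1))
    ultimately show "e \<in> (lch ` Ends s A \<union> rch ` Ends s A) - A" using b p by auto
  qed
next
  show "(lch ` Ends s A \<union> rch ` Ends s A) - A \<subseteq> Ends (Suc s) A"
  proof
    fix e assume e: "e \<in> (lch ` Ends s A \<union> rch ` Ends s A) - A"
    then obtain ps where p: "vpath ps" "length ps = s" "set ps \<inter> A = {}"
      and x: "e = lch (last ps) \<or> e = rch (last ps)" by (auto simp: Ends_def)
    have "vpath (ps @ [e])" using vpath_snoc p x by simp
    moreover have "set (ps @ [e]) \<inter> A = {}" using p e by auto
    ultimately show "e \<in> Ends (Suc s) A" unfolding Ends_def using p
      by (intro image_eqI[of _ _ "ps @ [e]"]) auto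
  qed
qed

lemma card_children:
  assumes E: "\<And>e. e \<in> E \<Longrightarrow> \<exists>j. 1 \<le> j \<and> j \<le> s \<and> e = node_num s j"
    and f: "finite E" and ne: "E \<noteq> {}"
  shows "card E + 1 \<le> card (lch ` E \<union> rch ` E)"
proof -
  have inj: "inj_on lch E"
  proof
    fix x y assume xy: "x \<in> E" "y \<in> E" "lch x = lch y"
    obtain a where a: "1 \<le> a" "a \<le> s" "x = node_num s a" using E xy(1) by blast
    obtain b where b: "1 \<le> b" "b \<le> s" "y = node_num s b" using E xy(2) by blast
    have "node_num (Suc s) a = node_num (Suc s) b" using xy(3) a b lch_nn by simp
    then have "a = b" by (simp add: node_num_def)
    then show "x = y" using a b by simp
  qed
  define e0 where "e0 = Max E"
  have e0: "e0 \<in> E" using f ne by (simp add: e0_def)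
  have nin: "rch e0 \<notin> lch ` E"
  proof
    assume "rch e0 \<in> lch ` E"
    then obtain e where e: "e \<in> E" "rch e0 = lch e" by auto
    obtain j0 where j0: "1 \<le> j0" "j0 \<le> s" "e0 = node_num s j0" using E e0 by blast
    obtain j where j: "1 \<le> j" "j \<le> s" "e = node_num s j" using E e by blast
    have "node_num (Suc s) (Suc j0) = node_num (Suc s) j" using e(2) rch_nn[OF j0(1,2)] lch_nn[OF j(1,2)] j0(3) j(3) by simp
    then have "j = Suc j0" by (simp add: node_num_def)
    then have "e > e0" using j j0 by (simp add: node_num_def)
    moreover have "e \<le> e0" using f e by (simp add: e0_def)
    ultimately show False by simp
  qed
  have "card E + 1 = card (insert (rch e0) (lch ` E))"
    using nin inj f by (simp add: card_image)
  also have "\<dots> \<le> card (lch ` E \<union> rch ` E)"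
    by (rule card_mono) (use f e0 in auto)
  finally show ?thesis .
qed

lemma main_bound:
  assumes "finite A" "s \<ge> 1" "Ends s A \<noteq> {}"
  shows "s \<le> card (Ends s A) + card {i \<in> A. 2 \<le> layer i \<and> layer i \<le> s}"
  using assms(2,3)
proof (induction s)
  case 0 then show ?case by simp
next
  case (Suc s)
  show ?case
  proof (cases "s = 0")
    case True
    then show ?thesis using Suc.prems Ends_finite[of 1 A] by (simp add: Suc_leI card_gt_0_iff)
  next
    case False
    then have s1: "s \<ge> 1" by simp
    define E where "E = Ends s A"
    define C where "C = lch ` E \<union> rch ` E"
    have eq: "Ends (Suc s) A = C - A" using Ends_Suc[OF s1] by (simp add: C_def E_def)
    have Ene: "E \<noteq> {}" using Suc.prems eq by (auto simp: C_def)
    have IH: "s \<le> card E + card {i \<in> A. 2 \<le> layer i \<and> layer i \<le> s}"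
      using Suc.IH s1 Ene by (simp add: E_def)
    have cc: "card E + 1 \<le> card C" unfolding C_def
      by (rule card_children) (use Ends_layer Ends_finite Ene E_def in auto)
    have fC: "finite C" using Ends_finite by (simp add: C_def E_def)
    have Clay: "\<And>c. c \<in> C \<Longrightarrow> layer c = Suc s"
    proof -
      fix c assume "c \<in> C"
      then obtain e where e: "e \<in> E" "c = lch e \<or> c = rch e" by (auto simp: C_def)
      then obtain j where j: "1 \<le> j" "j \<le> s" "e = node_num s j" using Ends_layer E_def by blast
      show "layer c = Suc s" using e j lch_nn rch_nn layer_nn by auto
    qed
    define L where "L = {i \<in> A. layer i = Suc s}"
    have "C = (C - A) \<union> (C \<inter> A)" by auto
    then have "card C \<le> card (C - A) + card (C \<inter> A)" by (metis card_Un_le)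
    moreover have "card (C \<inter> A) \<le> card L"
      by (rule card_mono) (use assms(1) Clay L_def in auto)
    moreover have "{i \<in> A. 2 \<le> layer i \<and> layer i \<le> Suc s} = {i \<in> A. 2 \<le> layer i \<and> layer i \<le> s} \<union> L"
      using s1 by (auto simp: L_def)
    moreover have "card ({i \<in> A. 2 \<le> layer i \<and> layer i \<le> s} \<union> L) = card {i \<in> A. 2 \<le> layer i \<and> layer i \<le> s} + card L"
      by (rule card_Un_disjoint) (use assms(1) L_def in auto)
    ultimately show ?thesis using IH cc eq by (simp add: E_def)
  qed
qed

theorem lemma8:
  fixes k :: nat and attrs :: "nat list"
  assumes "k \<ge> 1"
    and "set attrs \<subseteq> {1..m k}"
    and "subtable (Tstar_rows k) (map (\<lambda>i. (i, 0)) attrs) \<noteq> {}"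
  shows "r k (subtable (Tstar_rows k) (map (\<lambda>i. (i, 0)) attrs)) \<ge> max 1 (k - length attrs)"
proof -
  define A where "A = set attrs"
  define P where "P = {ps. vpath ps \<and> length ps = k \<and> set ps \<inter> A = {}}"
  have T: "Tstar_rows k = char_tuple k ` {ps. vpath ps \<and> length ps = k}"
    using cp_iff[OF assms(1)] by (auto simp: Tstar_rows_def)
  have cond: "(\<forall>i\<in>A. comp (char_tuple k ps) i = 0) \<longleftrightarrow> set ps \<inter> A = {}" for ps
    using assms(2) comp_char unfolding A_def by fastforce
  have sub: "subtable (Tstar_rows k) (map (\<lambda>i. (i, 0)) attrs) = char_tuple k ` P"
  proof -
    have "subtable (Tstar_rows k) (map (\<lambda>i. (i, 0)) attrs) = {\<delta> \<in> Tstar_rows k. \<forall>i\<in>A. comp \<delta> i = 0}"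
      by (auto simp: subtable_def A_def)
    also have "\<dots> = char_tuple k ` P" unfolding T P_def using cond by auto
    finally show ?thesis .
  qed
  have nuimg: "nu k ` char_tuple k ` P = (\<lambda>e. {e}) ` Ends k A"
  proof -
    have "nu k ` char_tuple k ` P = (\<lambda>ps. {last ps}) ` P"
      using nu_char[OF assms(1)] unfolding P_def image_image by (intro image_cong) auto
    also have "\<dots> = (\<lambda>e. {e}) ` Ends k A" by (simp add: Ends_def P_def image_image)
    finally show ?thesis .
  qed
  have rr: "r k (subtable (Tstar_rows k) (map (\<lambda>i. (i, 0)) attrs)) = card (Ends k A)"
    unfolding r_def sub nuimg by (simp add: card_image)
  have ne: "Ends k A \<noteq> {}" using assms(3) sub by (auto simp: Ends_def P_def)
  have b: "k \<le> card (Ends k A) + card {i \<in> A. 2 \<le> layer i \<and> layer i \<le> k}"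
    using main_bound[of A k] ne assms(1) by (simp add: A_def)
  have "card {i \<in> A. 2 \<le> layer i \<and> layer i \<le> k} \<le> card A" by (rule card_mono) (auto simp: A_def)
  also have "card A \<le> length attrs" by (simp add: A_def card_length)
  finally have b2: "k - length attrs \<le> card (Ends k A)" using b by simp
  have "1 \<le> card (Ends k A)" using ne Ends_finite by (simp add: Suc_leI card_gt_0_iff)
  then show ?thesis using rr b2 by simp
qed

end
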